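(* Let $a\neq 0$ be a real number. On the space $C^\infty((0,\infty))$ of smooth functions of a real variable $x>0$, with $D=\frac{d}{dx}$ and functions of $x$ acting by multiplication, define the linear operators $$B_+=x^2,\quad M=1,\quad N=\frac{e^{2ax^2}-1}{2ax}\,D,\quad A_+=\Big(\frac{1-e^{-2ax^2}}{2a}\Big)^{1/2},\quad A_-=\frac{e^{2ax^2}}{x}\Big(\frac{1-e^{-2ax^2}}{2a}\Big)^{1/2}D,$$ $$B_-=\frac{e^{2ax^2}-1}{2ax^2}\,D^2+\Big(\frac{e^{2ax^2}}{x}+\frac{1-e^{2ax^2}}{2ax^3}\Big)D .$$ Then these operators satisfy the commutation relations $[N,A_+]=A_+$, $[N,A_-]=-A_-$, $[A_-,A_+]=M$, $[N,B_+]=\frac{e^{2aB_+}-1}{a}$, $[N,B_-]=-2B_--4aN^2$, $[B_-,B_+]=4N+2Me^{2aB_+}$, $[A_+,B_-]=-2A_-+2a(NA_++A_+N)$, $[A_+,B_+]=0$, $[A_-,B_+]=2e^{2aB_+}A_+$, $[A_-,B_-]=-2a(NA_-+A_-N)$, and $[M,X]=0$ for each of these operators $X$.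
   Context: $[X,Y]=XY-YX$ denotes the commutator of operators, and $e^{cB_+}$ is the operator of multiplication by $e^{cx^2}$. For $a\neq 0$ real and $x>0$, $(1-e^{-2ax^2})/(2a)>0$, and the square root is the positive one. These relations are the commutation rules of the non-standard quantum two-photon algebra $U_{a}(h_6)$ containing a quantum $gl(2)$ subalgebra. *)

theory Defs
  imports "HOL-Analysis.Analysis"
begin

text \<open>Linear operators on real functions; only values at x > 0 matter.\<close>
type_synonym rop = "(real \<Rightarrow> real) \<Rightarrow> (real \<Rightarrow> real)"

definition smooth_on :: "real set \<Rightarrow> (real \<Rightarrow> real) \<Rightarrow> bool" where
  "smooth_on S f \<longleftrightarrow> (\<forall>n. \<forall>x\<in>S. ((deriv ^^ n) f) differentiable (at x))"

definition commutator :: "rop \<Rightarrow> rop \<Rightarrow> rop" where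
  "commutator X Y f = (\<lambda>x. X (Y f) x - Y (X f) x)"

definition Bp :: rop where "Bp f = (\<lambda>x. x^2 * f x)"

definition Mop :: rop where "Mop f = (\<lambda>x. f x)"

text \<open>the operator e^(c B_+): multiplication by exp(c x^2)\<close>
definition expBp :: "real \<Rightarrow> rop" where "expBp c f = (\<lambda>x. exp (c * x^2) * f x)"

definition Nop :: "real \<Rightarrow> rop" where
  "Nop a f = (\<lambda>x. (exp (2*a*x^2) - 1) / (2*a*x) * deriv f x)"

definition Ap :: "real \<Rightarrow> rop" where
  "Ap a f = (\<lambda>x. sqrt ((1 - exp (-2*a*x^2)) / (2*a)) * f x)"

definition Am :: "real \<Rightarrow> rop" where
  "Am a f = (\<lambda>x. exp (2*a*x^2) / x * sqrt ((1 - exp (-2*a*x^2)) / (2*a)) * deriv f x)"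

definition Bm :: "real \<Rightarrow> rop" where
  "Bm a f = (\<lambda>x. (exp (2*a*x^2) - 1) / (2*a*x^2) * deriv (deriv f) x
     + (exp (2*a*x^2) / x + (1 - exp (2*a*x^2)) / (2*a*x^3)) * deriv f x)"

end

theory Submission imports Defs begin

lemma D2:
  fixes c h cp cpp hp hpp :: "real \<Rightarrow> real"
  assumes dc: "\<And>y. y>0 \<Longrightarrow> (c has_real_derivative cp y) (at y)"
   and dc1: "\<And>y. y>0 \<Longrightarrow> (cp has_real_derivative cpp y) (at y)"
   and dh: "\<And>y. y>0 \<Longrightarrow> (h has_real_derivative hp y) (at y)"
   and dh1: "\<And>y. y>0 \<Longrightarrow> (hp has_real_derivative hpp y) (at y)"
   and x: "x>0"
  shows "deriv (\<lambda>y. c y * h y) x = cp x * h x + c x * hp x"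
   and "deriv (deriv (\<lambda>y. c y * h y)) x = cpp x * h x + 2 * cp x * hp x + c x * hpp x"
proof -
  have d1: "\<And>y. y>0 \<Longrightarrow> ((\<lambda>y. c y * h y) has_real_derivative cp y * h y + c y * hp y) (at y)"
    by (rule derivative_eq_intros dc dh | simp)+
  then show "deriv (\<lambda>y. c y * h y) x = cp x * h x + c x * hp x"
    using x DERIV_imp_deriv by blast
  have e: "\<And>y. y \<in> {0<..} \<Longrightarrow> cp y * h y + c y * hp y = deriv (\<lambda>y. c y * h y) y"
    using d1 DERIV_imp_deriv by (metis greaterThan_iff)
  have "((\<lambda>y. cp y * h y + c y * hp y) has_real_derivative cpp x * h x + 2 * cp x * hp x + c x * hpp x) (at x)"
    by (rule derivative_eq_intros dc dh dc1 dh1 x | simp)+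
  then have "(deriv (\<lambda>y. c y * h y) has_real_derivative cpp x * h x + 2 * cp x * hp x + c x * hpp x) (at x)"
    by (rule has_field_derivative_transform_within_open[where S="{0<..}"]) (use x e in auto)
  then show "deriv (deriv (\<lambda>y. c y * h y)) x = cpp x * h x + 2 * cp x * hp x + c x * hpp x"
    by (rule DERIV_imp_deriv)
qed

definition EE :: "real \<Rightarrow> real \<Rightarrow> real" where "EE a y = exp (2*a*y^2)"
definition GG :: "real \<Rightarrow> real \<Rightarrow> real" where "GG a y = exp (-2*a*y^2)"
definition SS :: "real \<Rightarrow> real \<Rightarrow> real" where "SS a y = sqrt ((1 - GG a y) / (2*a))"

lemma EG: "EE a y * GG a y = 1"
  unfolding EE_def GG_def by (simp add: exp_add[symmetric])

lemma EE_pos: "EE a y > 0" unfolding EE_def by simp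
lemma GG_pos: "GG a y > 0" unfolding GG_def by simp

lemma dEE: "(EE a has_real_derivative 4*a*y*EE a y) (at y)"
  unfolding EE_def[abs_def] by (rule derivative_eq_intros refl | simp)+

lemma dGG: "(GG a has_real_derivative -4*a*y*GG a y) (at y)"
  unfolding GG_def[abs_def] by (rule derivative_eq_intros refl | simp)+

lemma qpos: assumes a: "a \<noteq> 0" and y: "y > 0" shows "(1 - GG a y) / (2*a) > 0"
proof (cases "a>0")
  case True
  then have "-2*a*y^2 < 0" using y by simp
  then have "GG a y < 1" unfolding GG_def by simp
  then show ?thesis using True by (simp add: divide_pos_pos)
next
  case False
  then have "a<0" using a by simp
  then have "-2*a*y^2 > 0" using y by (simp add: mult_neg_pos zero_less_mult_iff)
  then have "GG a y > 1" unfolding GG_def by simp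
  then show ?thesis using \<open>a<0\<close> by (simp add: divide_neg_neg)
qed

lemma SS_pos: "a \<noteq> 0 \<Longrightarrow> y > 0 \<Longrightarrow> SS a y > 0"
  unfolding SS_def using qpos[of a y] by simp

lemma SS_sq: "a \<noteq> 0 \<Longrightarrow> y > 0 \<Longrightarrow> (SS a y)^2 = (1 - GG a y) / (2*a)"
  unfolding SS_def using qpos[of a y] by (simp add: less_imp_le)

lemma EE_S: assumes "a \<noteq> 0" "y > 0" shows "EE a y = 1 / (1 - 2*a*(SS a y)^2)"
proof -
  have "1 - 2*a*(SS a y)^2 = GG a y" using SS_sq[OF assms] assms(1) by (simp add: field_simps)
  then have "EE a y * (1 - 2*a*(SS a y)^2) = 1" using EG[of a y] by simp
  then show ?thesis using EE_pos[of a y]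
    by (metis divide_eq_imp mult.commute mult_eq_0_iff zero_neq_one)
qed

lemma dSS: assumes a: "a \<noteq> 0" and y: "y > 0"
  shows "(SS a has_real_derivative y / (EE a y * SS a y)) (at y)"
proof -
  have "((\<lambda>y. (1 - GG a y) / (2*a)) has_real_derivative 2*y*GG a y) (at y)"
    apply (rule derivative_eq_intros dGG refl)+
    using a by (auto simp: field_simps)
  from DERIV_chain2[OF DERIV_real_sqrt[OF qpos[OF a y]] this]
  have "(SS a has_real_derivative inverse (SS a y) / 2 * (2*y*GG a y)) (at y)"
    unfolding SS_def[abs_def] by simp
  moreover have "inverse (SS a y) / 2 * (2*y*GG a y) = y / (EE a y * SS a y)"
    using SS_pos[OF a y] EG[of a y] EE_pos[of a y] by (simp add: field_simps)
  ultimately show ?thesis by simp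
qed

definition "cN a y = (EE a y - 1)/(2*a*y)"
definition "cN1 a y = 2*EE a y - (EE a y - 1)/(2*a*y^2)"
definition "cN2 a y = 8*a*y*EE a y - 2*EE a y/y + (EE a y - 1)/(a*y^3)"
definition "S1 a y = y/(EE a y * SS a y)"
definition "S2 a y = 1/(EE a y * SS a y) - y*(4*a*y*EE a y*SS a y + y/SS a y)/((EE a y)^2 * (SS a y)^2)"
definition "cA a y = EE a y / y * SS a y"
definition "cA1 a y = 4*a*EE a y*SS a y + 1/SS a y - EE a y*SS a y/y^2"
definition "cA2 a y = 16*a^2*y*EE a y*SS a y + 4*a*y/SS a y - y/(EE a y*(SS a y)^3)
   - 4*a*EE a y*SS a y/y - 1/(y*SS a y) + 2*EE a y*SS a y/y^3"
definition "b1 a y = (EE a y - 1)/(2*a*y^2)"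
definition "b1' a y = 2*EE a y/y - (EE a y - 1)/(a*y^3)"
definition "b2 a y = EE a y/y + (1 - EE a y)/(2*a*y^3)"
definition "b2' a y = 4*a*EE a y - 3*EE a y/y^2 + 3*(EE a y - 1)/(2*a*y^4)"

context fixes a y :: real assumes a: "a \<noteq> 0" and y: "y > 0"
begin
lemma dcN: "(cN a has_real_derivative cN1 a y) (at y)"
  unfolding cN_def[abs_def] cN1_def
  using a y by (auto intro!: derivative_eq_intros dEE simp: field_simps power2_eq_square)
lemma dcN1: "(cN1 a has_real_derivative cN2 a y) (at y)"
  unfolding cN1_def[abs_def] cN2_def
  using a y by (auto intro!: derivative_eq_intros dEE simp: field_simps power2_eq_square power3_eq_cube)
lemma dS1: "(S1 a has_real_derivative S2 a y) (at y)"
  unfolding S1_def[abs_def] S2_def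
  using a y SS_pos[OF a y] EE_pos[of a y] by (auto intro!: derivative_eq_intros dEE dSS[OF a y] simp: field_simps power2_eq_square)
lemma dcA: "(cA a has_real_derivative cA1 a y) (at y)"
  unfolding cA_def[abs_def] cA1_def
  using a y SS_pos[OF a y] EE_pos[of a y] by (auto intro!: derivative_eq_intros dEE dSS[OF a y] simp: field_simps power2_eq_square)
lemma dcA1: "(cA1 a has_real_derivative cA2 a y) (at y)"
  unfolding cA1_def[abs_def] cA2_def
  using a y SS_pos[OF a y] EE_pos[of a y] by (auto intro!: derivative_eq_intros dEE dSS[OF a y] simp: field_simps power2_eq_square power3_eq_cube)
lemma db1: "(b1 a has_real_derivative b1' a y) (at y)"
  unfolding b1_def[abs_def] b1'_def
  using a y by (auto intro!: derivative_eq_intros dEE simp: field_simps power2_eq_square power3_eq_cube)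
lemma db2: "(b2 a has_real_derivative b2' a y) (at y)"
  unfolding b2_def[abs_def] b2'_def
  using a y by (auto intro!: derivative_eq_intros dEE simp: field_simps power2_eq_square power3_eq_cube power4_eq_xxxx)
end


lemma Nop_eq: "Nop a g = (\<lambda>y. cN a y * deriv g y)"
  by (simp add: Nop_def cN_def EE_def fun_eq_iff)
lemma Ap_eq: "Ap a g = (\<lambda>y. SS a y * g y)"
  by (simp add: Ap_def SS_def GG_def fun_eq_iff)
lemma Am_eq: "Am a g = (\<lambda>y. cA a y * deriv g y)"
  by (simp add: Am_def cA_def SS_def GG_def EE_def fun_eq_iff)
lemma Bm_eq: "Bm a g = (\<lambda>y. b1 a y * deriv (deriv g) y + b2 a y * deriv g y)"
  by (simp add: Bm_def b1_def b2_def EE_def fun_eq_iff)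
lemma Bp_eq: "Bp g = (\<lambda>y. y^2 * g y)"
  by (simp add: Bp_def fun_eq_iff)
lemma expBp_eq: "expBp (2*a) g = (\<lambda>y. EE a y * g y)"
  by (simp add: expBp_def EE_def fun_eq_iff)
lemma Mop_eq: "Mop g = g"
  by (simp add: Mop_def fun_eq_iff)

lemmas ops = Nop_eq Ap_eq Am_eq Bm_eq Bp_eq expBp_eq Mop_eq

theorem mainTheorem5:
  fixes a x :: real and f :: "real \<Rightarrow> real"
  assumes "a \<noteq> 0" and "smooth_on {0<..} f" and "x > 0"
  shows "(commutator (Nop a) (Ap a) f x = Ap a f x) \<and>
      (commutator (Nop a) (Am a) f x = - Am a f x) \<and>
      (commutator (Am a) (Ap a) f x = Mop f x) \<and>
      (commutator (Nop a) Bp f x = (expBp (2*a) f x - Mop f x) / a) \<and>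
      (commutator (Nop a) (Bm a) f x = -2 * Bm a f x - 4*a * Nop a (Nop a f) x) \<and>
      (commutator (Bm a) Bp f x = 4 * Nop a f x + 2 * Mop (expBp (2*a) f) x) \<and>
      (commutator (Ap a) (Bm a) f x = -2 * Am a f x + 2*a * (Nop a (Ap a f) x + Ap a (Nop a f) x)) \<and>
      (commutator (Ap a) Bp f x = 0) \<and>
      (commutator (Am a) Bp f x = 2 * expBp (2*a) (Ap a f) x) \<and>
      (commutator (Am a) (Bm a) f x = -2*a * (Nop a (Am a f) x + Am a (Nop a f) x)) \<and>
      (commutator Mop (Nop a) f x = 0) \<and>
      (commutator Mop (Ap a) f x = 0) \<and>
      (commutator Mop (Am a) f x = 0) \<and>
      (commutator Mop Bp f x = 0) \<and>
      (commutator Mop (Bm a) f x = 0) \<and>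
      (commutator Mop Mop f x = 0)"
proof -
  have a: "a \<noteq> 0" and x: "x > 0" using assms by auto
  have sm: "\<And>n y. y > 0 \<Longrightarrow> ((deriv ^^ n) f) differentiable (at y)"
    using assms(2) unfolding smooth_on_def by auto
  have d0: "\<And>y. y>0 \<Longrightarrow> (f has_real_derivative deriv f y) (at y)"
    using sm[of _ 0] by (simp add: DERIV_deriv_iff_real_differentiable)
  have d1: "\<And>y. y>0 \<Longrightarrow> (deriv f has_real_derivative deriv (deriv f) y) (at y)"
    using sm[of _ 1] by (simp add: DERIV_deriv_iff_real_differentiable)
  have d2: "\<And>y. y>0 \<Longrightarrow> (deriv (deriv f) has_real_derivative deriv (deriv (deriv f)) y) (at y)"
    using sm[of _ 2] by (simp add: DERIV_deriv_iff_real_differentiable numeral_2_eq_2)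
  have dS: "\<And>y. y>0 \<Longrightarrow> (SS a has_real_derivative S1 a y) (at y)"
    using dSS[OF a] by (simp add: S1_def)
  have dy2: "\<And>y. ((\<lambda>y::real. y^2) has_real_derivative 2*y) (at y)"
    by (auto intro!: derivative_eq_intros)
  have dy1: "\<And>y. ((\<lambda>y::real. 2*y) has_real_derivative 2) (at y)"
    by (auto intro!: derivative_eq_intros)
  note PS = D2[where c="SS a" and cp="S1 a" and cpp="S2 a" and h=f and hp="deriv f" and hpp="deriv (deriv f)",
     OF dS dS1[OF a] d0 d1 x, simplified]
  note PN = D2[where c="cN a" and cp="cN1 a" and cpp="cN2 a" and h="deriv f" and hp="deriv (deriv f)" and hpp="deriv (deriv (deriv f))",
     OF dcN[OF a] dcN1[OF a] d1 d2 x, simplified]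
  note PA = D2[where c="cA a" and cp="cA1 a" and cpp="cA2 a" and h="deriv f" and hp="deriv (deriv f)" and hpp="deriv (deriv (deriv f))",
     OF dcA[OF a] dcA1[OF a] d1 d2 x, simplified]
  note PB = D2[where c="\<lambda>y. y^2" and cp="\<lambda>y. 2*y" and cpp="\<lambda>y. 2" and h=f and hp="deriv f" and hpp="deriv (deriv f)",
     OF dy2 dy1 d0 d1 x, simplified]
  have "((\<lambda>y. b1 a y * deriv (deriv f) y + b2 a y * deriv f y) has_real_derivative
     b1' a x * deriv (deriv f) x + b1 a x * deriv (deriv (deriv f)) x + b2' a x * deriv f x + b2 a x * deriv (deriv f) x) (at x)"
    by (rule derivative_eq_intros db1[OF a x] db2[OF a x] d1[OF x] d2[OF x] refl | simp)+
  then have PM: "deriv (\<lambda>y. b1 a y * deriv (deriv f) y + b2 a y * deriv f y) x =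
     b1' a x * deriv (deriv f) x + b1 a x * deriv (deriv (deriv f)) x + b2' a x * deriv f x + b2 a x * deriv (deriv f) x"
    by (rule DERIV_imp_deriv)
  note P = PS PN PA PB PM
  note cdefs = cN_def cN1_def cN2_def S1_def S2_def cA_def cA1_def cA2_def b1_def b1'_def b2_def b2'_def
  have Sp: "SS a x > 0" using SS_pos[OF a x] .
  have w: "1 - 2*a*(SS a x)^2 > 0" using EE_S[OF a x] EE_pos[of a x]
    by (metis zero_less_divide_1_iff)
  have Ep: "EE a x > 0" by (rule EE_pos)
  have nz: "a \<noteq> 0" "x \<noteq> 0" "SS a x \<noteq> 0" "EE a x \<noteq> 0" using a x Sp Ep by auto
  have rel: "2*a*EE a x*(SS a x)^2 = EE a x - 1"
    using EE_S[OF a x] w by (simp add: field_simps)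
  have c1: "commutator (Nop a) (Ap a) f x = Ap a f x"
    unfolding commutator_def ops P unfolding cdefs
    by (simp add: field_simps nz, (algebra | (insert rel, algebra))?)
  have c2: "commutator (Nop a) (Am a) f x = - Am a f x"
    unfolding commutator_def ops P unfolding cdefs
    by (simp add: field_simps nz, (algebra | (insert rel, algebra))?)
  have c3: "commutator (Am a) (Ap a) f x = Mop f x"
    unfolding commutator_def ops P unfolding cdefs
    by (simp add: field_simps nz, (algebra | (insert rel, algebra))?)
  have c4: "commutator (Nop a) Bp f x = (expBp (2*a) f x - Mop f x) / a"
    unfolding commutator_def ops P unfolding cdefs
    by (simp add: field_simps nz, (algebra | (insert rel, algebra))?)
  have k2: "cN a x * b1' a x - 2*b1 a x*cN1 a x + 2*b1 a x + 4*a*(cN a x)^2 = 0"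
    unfolding cdefs using a x by (simp add: field_simps power2_eq_square power3_eq_cube)
  have k1: "cN a x * b2' a x - b1 a x * cN2 a x - b2 a x * cN1 a x + 2*b2 a x + 4*a*cN a x*cN1 a x = 0"
    unfolding cdefs using a x by (simp add: field_simps power2_eq_square power3_eq_cube power4_eq_xxxx)
  have c5: "commutator (Nop a) (Bm a) f x = -2 * Bm a f x - 4*a * Nop a (Nop a f) x"
    unfolding commutator_def ops P using k1 k2 by algebra
  have c6: "commutator (Bm a) Bp f x = 4 * Nop a f x + 2 * Mop (expBp (2*a) f) x"
    unfolding commutator_def ops P unfolding cdefs
    by (simp add: field_simps nz, (algebra | (insert rel, algebra))?)
  have c7: "commutator (Ap a) (Bm a) f x = -2 * Am a f x + 2*a * (Nop a (Ap a f) x + Ap a (Nop a f) x)"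
    unfolding commutator_def ops P unfolding cdefs
    by (simp add: field_simps nz, (algebra | (insert rel, algebra))?)
  have c8: "commutator (Ap a) Bp f x = 0"
    unfolding commutator_def ops P by simp
  have c9: "commutator (Am a) Bp f x = 2 * expBp (2*a) (Ap a f) x"
    unfolding commutator_def ops P unfolding cdefs
    by (simp add: field_simps nz, (algebra | (insert rel, algebra))?)
  have c10: "commutator (Am a) (Bm a) f x = -2*a * (Nop a (Am a f) x + Am a (Nop a f) x)"
    unfolding commutator_def ops P unfolding cdefs
    by (simp add: field_simps nz, (algebra | (insert rel, algebra))?)
  show ?thesis using c1 c2 c3 c4 c5 c6 c7 c8 c9 c10
    by (simp add: commutator_def Mop_eq)
qed

end
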